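(* Let $B=\mathrm{GF}(p^m)$ and $F=\mathrm{GF}(p^{mt})$ and assume $t$ is divisible by $p$. Let $\alpha^*\neq\overline{\alpha}$ be elements of $F$, and let $K_{\alpha^*,\overline{\alpha}}=\{z\in F:\mathrm{Tr}_{F/B}(z(\overline{\alpha}-\alpha^* ))=0\}$, a $B$-subspace of dimension $t-1$. Let $\{u_1,\dots,u_{t-1}\}$ and $\{v_1,\dots,v_{t-1}\}$ be two bases of $K_{\alpha^*,\overline{\alpha}}$ over $B$, completed to bases $\{u_1,\dots,u_t\}$ and $\{v_1,\dots,v_t\}$ of $F$ over $B$. For $i\in[t]$ set $p_i(x)=\dfrac{\mathrm{Tr}_{F/B}(u_i(x-\alpha^* ))}{x-\alpha^*}$ and $q_i(x)=\dfrac{\mathrm{Tr}_{F/B}(v_i(x-\overline{\alpha}))}{x-\overline{\alpha}}$. Then $p_t(\overline{\alpha})$ lies in the $B$-span of $\{q_i(\overline{\alpha}):i\in[t-1]\}$, and $q_t(\alpha^* )$ lies in the $B$-span of $\{p_i(\alpha^* ):i\in[t-1]\}$.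
   Context: $\mathrm{Tr}_{F/B}(x)=\sum_{i=0}^{t-1}x^{|B|^i}$ is the field trace; $[t]=\{1,\dots,t\}$. "Dependent over $B$" means lying in the $B$-linear span. *)

theory Defs
  imports "HOL-Computational_Algebra.Polynomial"
begin

text \<open>The finite field F is modelled as a finite field type 'a with CARD('a) = p^(m*t).
  The subfield B = GF(p^m) is the set of fixed points of x \<mapsto> x^(p^m), where q = p^m.\<close>

definition subB :: "nat \<Rightarrow> 'a::field set" where
  "subB q = {x. x ^ q = x}"

definition trFB :: "nat \<Rightarrow> nat \<Rightarrow> 'a::field \<Rightarrow> 'a" where
  "trFB q t x = (\<Sum>i<t. x ^ (q ^ i))"

definition Bspan :: "nat \<Rightarrow> 'i set \<Rightarrow> ('i \<Rightarrow> 'a::field) \<Rightarrow> 'a set" where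
  "Bspan q I w = {y. \<exists>c. (\<forall>i\<in>I. c i \<in> subB q) \<and> y = (\<Sum>i\<in>I. c i * w i)}"

definition Bindep :: "nat \<Rightarrow> 'i set \<Rightarrow> ('i \<Rightarrow> 'a::field) \<Rightarrow> bool" where
  "Bindep q I w = (\<forall>c. (\<forall>i\<in>I. c i \<in> subB q) \<longrightarrow> (\<Sum>i\<in>I. c i * w i) = 0 \<longrightarrow> (\<forall>i\<in>I. c i = 0))"

definition Bbasis :: "nat \<Rightarrow> 'i set \<Rightarrow> ('i \<Rightarrow> 'a::field) \<Rightarrow> 'a set \<Rightarrow> bool" where
  "Bbasis q I w V = ((\<forall>i\<in>I. w i \<in> V) \<and> Bindep q I w \<and> Bspan q I w = V)"

text \<open>The polynomial Tr_{F/B}(w (x - a)) in x, i.e. sum_{i<t} w^(q^i) (x - a)^(q^i),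
  and the rational function Tr_{F/B}(w (x - a)) / (x - a), which is a polynomial
  (exact polynomial division by x - a).\<close>
definition trpoly :: "nat \<Rightarrow> nat \<Rightarrow> 'a::field \<Rightarrow> 'a \<Rightarrow> 'a poly" where
  "trpoly q t w a = (\<Sum>i<t. smult (w ^ (q ^ i)) ([:- a, 1:] ^ (q ^ i)))"

definition trquot :: "nat \<Rightarrow> nat \<Rightarrow> 'a::field \<Rightarrow> 'a \<Rightarrow> 'a poly" where
  "trquot q t w a = trpoly q t w a div [:- a, 1:]"

end

theory Submission
  imports Defs "HOL-Computational_Algebra.Primes" "HOL-Algebra.Multiplicative_Group"
begin

lemma power_card_same:
  fixes x :: "'a :: {field,finite}"
  shows "x ^ card (UNIV :: 'a set) = x"
proof (cases "x = 0")
  case False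
  have "x * (\<Prod>y\<in>UNIV-{0}. x * y) = x * x ^ (card (UNIV :: 'a set) - 1) * \<Prod>(UNIV-{0})"
    by (simp add: prod.distrib mult_ac)
  also have "x * x ^ (card (UNIV :: 'a set) - 1) = x ^ Suc (card (UNIV :: 'a set) - 1)"
    by (subst power_Suc) auto
  also have "Suc (card (UNIV :: 'a set) - 1) = card (UNIV :: 'a set)"
    using finite_UNIV_card_ge_0[where ?'a = 'a] by simp
  also have "(\<Prod>y\<in>UNIV-{0}. x * y) = (\<Prod>y\<in>UNIV-{0}. y)"
    by (rule prod.reindex_bij_witness[of _ "\<lambda>y. y / x" "\<lambda>y. x * y"]) (use False in auto)
  finally show ?thesis
    by simp
qed (use finite_UNIV_card_ge_0[where ?'a = 'a] in auto)

lemma of_nat_card_zero: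
  "of_nat (card (UNIV :: 'a :: {field,finite} set)) = (0::'a)"
proof -
  define G where "G = \<lparr>carrier = (UNIV :: 'a set), monoid.mult = (+), one = (0::'a)\<rparr>"
  have grp: "group G"
    by (rule groupI) (auto simp: G_def add.assoc intro: exI[of _ "- x" for x])
  have pw: "(1::'a) [^]\<^bsub>G\<^esub> n = of_nat n" for n
    by (induction n) (auto simp: G_def)
  have "(1::'a) [^]\<^bsub>G\<^esub> order G = \<one>\<^bsub>G\<^esub>"
    by (rule group.pow_order_eq_1[OF grp]) (simp add: G_def)
  moreover have "order G = card (UNIV :: 'a set)" by (simp add: order_def G_def)
  ultimately show ?thesis using pw by (simp add: G_def)
qed


lemma char_eq:
  assumes "prime p" "card (UNIV :: 'a :: {field,finite} set) = p ^ k"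
  shows "CHAR('a) = p"
proof -
  have pos: "CHAR('a) > 0" by (rule finite_imp_CHAR_pos) simp
  have pr: "prime CHAR('a)" by (rule prime_CHAR_semidom[OF pos])
  have "CHAR('a) dvd p ^ k"
    using of_nat_card_zero[where 'a='a] assms(2) of_nat_eq_0_iff_char_dvd by metis
  hence "CHAR('a) dvd p" using pr prime_dvd_power by blast
  thus ?thesis using pr assms(1) primes_dvd_imp_eq by blast
qed

lemma trquot_eq:
  fixes a w :: "'a::field"
  assumes "q > 0"
  shows "trquot q t w a = (\<Sum>i<t. Polynomial.smult (w ^ (q ^ i)) ([:- a, 1:] ^ (q ^ i - 1)))"
proof -
  have "trpoly q t w a = [:- a, 1:] * (\<Sum>i<t. Polynomial.smult (w ^ (q ^ i)) ([:- a, 1:] ^ (q ^ i - 1)))"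
    unfolding trpoly_def sum_distrib_left
  proof (rule sum.cong[OF refl])
    fix i
    have "q ^ i = Suc (q ^ i - 1)" using assms by simp
    hence "[:- a, 1:] ^ (q ^ i) = [:- a, 1:] * [:- a, 1:] ^ (q ^ i - 1)"
      by (metis power_Suc)
    thus "Polynomial.smult (w ^ q ^ i) ([:- a, 1:] ^ q ^ i) =
      [:- a, 1:] * Polynomial.smult (w ^ q ^ i) ([:- a, 1:] ^ (q ^ i - 1))" by simp
  qed
  moreover have "[:- a, 1:] \<noteq> 0" by simp
  ultimately show ?thesis unfolding trquot_def
    by (metis nonzero_mult_div_cancel_left)
qed

lemma poly_trquot_same:
  fixes a w :: "'a::field"
  assumes "q > 1" "t > 0"
  shows "poly (trquot q t w a) a = w"
proof -
  have "poly (trquot q t w a) a = (\<Sum>i<t. if i = 0 then w else 0)"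
    unfolding trquot_eq[of q, OF order.strict_trans[OF zero_less_one assms(1)]] poly_sum
  proof (rule sum.cong[OF refl])
    fix i assume "i \<in> {..<t}"
    show "poly (Polynomial.smult (w ^ q ^ i) ([:- a, 1:] ^ (q ^ i - 1))) a = (if i = 0 then w else 0)"
    proof (cases "i = 0")
      case False
      have "q ^ i > 1" using assms False by (metis One_nat_def neq0_conv one_less_power)
      hence "q ^ i - 1 \<noteq> 0" by simp
      thus ?thesis using False by (simp add: poly_power)
    qed simp
  qed
  also have "\<dots> = w" using assms by (simp add: sum.delta)
  finally show ?thesis .
qed

lemma poly_trquot_other:
  fixes a b w :: "'a::field"
  assumes "q > 0" "b \<noteq> a"
  shows "poly (trquot q t w a) b = trFB q t (w * (b - a)) / (b - a)"
proof -
  have "(b - a) * poly (trquot q t w a) b = trFB q t (w * (b - a))"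
    unfolding trquot_eq[OF assms(1)] poly_sum trFB_def sum_distrib_left
  proof (rule sum.cong[OF refl])
    fix i
    have "q ^ i = Suc (q ^ i - 1)" using assms by simp
    hence "(b - a) ^ (q ^ i) = (b - a) * (b - a) ^ (q ^ i - 1)"
      by (metis power_Suc)
    thus "(b - a) * poly (Polynomial.smult (w ^ q ^ i) ([:- a, 1:] ^ (q ^ i - 1))) b = (w * (b - a)) ^ q ^ i"
      by (simp add: poly_power power_mult_distrib)
  qed
  thus ?thesis using assms(2) by (simp add: field_simps)
qed


lemma tr_in_B:
  fixes y :: "'a::{field,finite}"
  assumes "prime CHAR('a)" "q = CHAR('a) ^ m" "card (UNIV :: 'a set) = q ^ t" "t > 0"
  shows "trFB q t y \<in> subB q"
proof -
  obtain n where t: "t = Suc n" using assms(4) by (cases t) auto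
  have "trFB q t y ^ q = (\<Sum>i<t. (y ^ (q ^ i)) ^ q)"
    unfolding trFB_def by (rule freshmans_dream_sum'[OF assms(1,2)])
  also have "\<dots> = (\<Sum>i<t. y ^ (q ^ Suc i))"
    by (simp add: power_mult[symmetric] mult.commute)
  also have "\<dots> = (\<Sum>i<n. y ^ (q ^ Suc i)) + y ^ (q ^ t)"
    by (simp add: t)
  also have "y ^ (q ^ t) = y" using power_card_same[of y] assms(3) by simp
  also have "(\<Sum>i<n. y ^ (q ^ Suc i)) + y = trFB q t y"
    unfolding trFB_def t sum.lessThan_Suc_shift by simp
  finally show ?thesis by (simp add: subB_def)
qed

lemma subB_pow:
  fixes s :: "'a::field"
  assumes "s \<in> subB q"
  shows "s ^ (q ^ i) = s"
proof (induction i)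
  case (Suc i)
  have "s ^ (q ^ Suc i) = (s ^ q) ^ (q ^ i)" by (simp add: power_mult[symmetric])
  also have "\<dots> = s" using assms Suc by (simp add: subB_def)
  finally show ?case .
qed simp

lemma subB_tr_zero:
  fixes s :: "'a::field"
  assumes "s \<in> subB q" "of_nat t = (0::'a)"
  shows "trFB q t s = 0"
  unfolding trFB_def using subB_pow[OF assms(1)] assms(2) by simp

lemma subB_neg:
  fixes s :: "'a::field"
  assumes "prime CHAR('a)" "q = CHAR('a) ^ m" "s \<in> subB q"
  shows "- s \<in> subB q"
proof -
  have "(- s + s) ^ q = (- s) ^ q + s ^ q" by (rule freshmans_dream'[OF assms(1,2)])
  moreover have "q > 0" using assms(1,2) by (simp add: prime_gt_0_nat)
  ultimately have "(- s) ^ q = - s" using assms(3)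
    by (simp add: subB_def power_0_left eq_neg_iff_add_eq_0)
  thus ?thesis by (simp add: subB_def)
qed

theorem lemma7:
  fixes p m t :: nat and a_star a_bar :: "'a::{field,finite}" and u v :: "nat \<Rightarrow> 'a"
  assumes "prime p" and "m > 0" and "t > 0"
    and "card (UNIV :: 'a set) = p ^ (m * t)"
    and "p dvd t"
    and "a_star \<noteq> a_bar"
    and "Bbasis (p ^ m) {1..t-1} u {z. trFB (p ^ m) t (z * (a_bar - a_star)) = 0}"
    and "Bbasis (p ^ m) {1..t-1} v {z. trFB (p ^ m) t (z * (a_bar - a_star)) = 0}"
    and "Bbasis (p ^ m) {1..t} u UNIV"
    and "Bbasis (p ^ m) {1..t} v UNIV"
  shows "poly (trquot (p ^ m) t (u t) a_star) a_bar
           \<in> Bspan (p ^ m) {1..t-1} (\<lambda>i. poly (trquot (p ^ m) t (v i) a_bar) a_bar)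
     \<and> poly (trquot (p ^ m) t (v t) a_bar) a_star
           \<in> Bspan (p ^ m) {1..t-1} (\<lambda>i. poly (trquot (p ^ m) t (u i) a_star) a_star)"
proof -
  define q where "q = p ^ m"
  define d where "d = a_bar - a_star"
  have d0: "d \<noteq> 0" using assms(6) by (simp add: d_def)
  have ch: "CHAR('a) = p" using char_eq[OF assms(1,4)] .
  have prch: "prime CHAR('a)" using ch assms(1) by simp
  have qch: "q = CHAR('a) ^ m" by (simp add: q_def ch)
  have q1: "q > 1" using assms(1,2) prime_gt_1_nat one_less_power unfolding q_def by blast
  have q0: "q > 0" using q1 by simp
  have cardq: "card (UNIV :: 'a set) = q ^ t" using assms(4) by (simp add: q_def power_mult)
  have t0: "of_nat t = (0::'a)" using assms(5) ch of_nat_eq_0_iff_char_dvd by metis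
  define K where "K = {z::'a. trFB q t (z * d) = 0}"
  have spv: "Bspan q {1..t-1} v = K" using assms(8) by (simp add: Bbasis_def K_def q_def d_def)
  have spu: "Bspan q {1..t-1} u = K" using assms(7) by (simp add: Bbasis_def K_def q_def d_def)
  have pv: "(\<lambda>i. poly (trquot q t (v i) a_bar) a_bar) = v"
    using poly_trquot_same[OF q1 assms(3)] by auto
  have pu: "(\<lambda>i. poly (trquot q t (u i) a_star) a_star) = u"
    using poly_trquot_same[OF q1 assms(3)] by auto
  have c1: "poly (trquot q t (u t) a_star) a_bar \<in> K"
  proof -
    have e: "poly (trquot q t (u t) a_star) a_bar = trFB q t (u t * d) / d"
      using poly_trquot_other[OF q0 assms(6)[symmetric]] by (simp add: d_def)
    have "trFB q t (u t * d) \<in> subB q" by (rule tr_in_B[OF prch qch cardq assms(3)])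
    hence "trFB q t (trFB q t (u t * d)) = 0" by (rule subB_tr_zero[OF _ t0])
    thus ?thesis unfolding e K_def using d0 by simp
  qed
  have c2: "poly (trquot q t (v t) a_bar) a_star \<in> K"
  proof -
    have e: "poly (trquot q t (v t) a_bar) a_star = trFB q t (v t * (- d)) / (- d)"
      using poly_trquot_other[OF q0 assms(6)] by (simp add: d_def)
    have "trFB q t (v t * (- d)) \<in> subB q" by (rule tr_in_B[OF prch qch cardq assms(3)])
    hence "- trFB q t (v t * (- d)) \<in> subB q" by (rule subB_neg[OF prch qch])
    hence "trFB q t (- trFB q t (v t * (- d))) = 0" by (rule subB_tr_zero[OF _ t0])
    thus ?thesis unfolding e K_def using d0 by simp
  qed
  show ?thesis using c1 c2 spu spv pu pv unfolding q_def d_def K_def by simp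
qed

end
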